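(* Let $A$ be an antilinear operator on a complex $n$-dimensional space $W$ and let $\lambda>0$ be real. For integers $k\ge 0$ put $W_\lambda^{(k)}=\ker(A^2-\lambda^2I)^k$ and, for $k\ge1$, $W_\lambda^{(k)\pm}=\{x\in W:(A\mp\lambda I)(A^2-\lambda^2I)^{k-1}x=0\}$ (real subspaces of $W$ containing $W_\lambda^{(k-1)}$). Then for every positive integer $k$, as real vector spaces, $$W_\lambda^{(k)}/W_\lambda^{(k-1)}=W_\lambda^{(k)+}/W_\lambda^{(k-1)}\ \oplus\ W_\lambda^{(k)-}/W_\lambda^{(k-1)},$$ and moreover $W_\lambda^{(k)}/W_\lambda^{(k-1)}=\mathrm{span}_{\mathbb C}\bigl(W_\lambda^{(k)+}/W_\lambda^{(k-1)}\bigr)$.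
   Context: An antilinear operator satisfies $A(zv+w)=\bar z Av+Aw$; $A^2$ is then complex linear and commutes with $A$. Since $\lambda$ is real, $A\mp\lambda I$ is antilinear, so $W_\lambda^{(k)\pm}$ are real (not necessarily complex) subspaces. *)

theory Defs
  imports "HOL-Analysis.Analysis"
begin

text \<open>The complex n-dimensional space W is modelled as complex^'n (n = CARD('n)).
  Complex scalar multiplication is (*s); real scalar multiplication is scaleR.\<close>

definition antilinear :: "(complex^'n \<Rightarrow> complex^'n) \<Rightarrow> bool" where
  "antilinear A \<longleftrightarrow> (\<forall>z v w. A (z *s v + w) = cnj z *s A v + A w)"

definition sqop :: "(complex^'n \<Rightarrow> complex^'n) \<Rightarrow> real \<Rightarrow> complex^'n \<Rightarrow> complex^'n" where
  "sqop A l x = A (A x) - (l^2) *\<^sub>R x"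

definition Wk :: "(complex^'n \<Rightarrow> complex^'n) \<Rightarrow> real \<Rightarrow> nat \<Rightarrow> (complex^'n) set" where
  "Wk A l k = {x. (sqop A l ^^ k) x = 0}"

definition Wplus :: "(complex^'n \<Rightarrow> complex^'n) \<Rightarrow> real \<Rightarrow> nat \<Rightarrow> (complex^'n) set" where
  "Wplus A l k = {x. A ((sqop A l ^^ (k-1)) x) - l *\<^sub>R ((sqop A l ^^ (k-1)) x) = 0}"

definition Wminus :: "(complex^'n \<Rightarrow> complex^'n) \<Rightarrow> real \<Rightarrow> nat \<Rightarrow> (complex^'n) set" where
  "Wminus A l k = {x. A ((sqop A l ^^ (k-1)) x) + l *\<^sub>R ((sqop A l ^^ (k-1)) x) = 0}"

end

theory Submission
  imports Defs
begin

lemma scaleR_vs: "(r::real) *\<^sub>R (v::complex^'n) = (complex_of_real r) *s v"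
  by (simp add: vec_eq_iff scaleR_conv_of_real[where 'a=complex])

lemma al_add: "antilinear A \<Longrightarrow> A (v + w) = A v + A w"
  unfolding antilinear_def by (metis complex_cnj_one vector_smult_lid)

lemma al_zero: "antilinear A \<Longrightarrow> A 0 = 0"
  using al_add[of A 0 0] by simp

lemma al_smult: "antilinear A \<Longrightarrow> A (z *s v) = cnj z *s A v"
  unfolding antilinear_def by (metis add.right_neutral al_zero antilinear_def)

lemma al_scaleR: "antilinear A \<Longrightarrow> A (r *\<^sub>R v) = r *\<^sub>R A v"
  by (simp add: scaleR_vs al_smult)

lemma al_neg: "antilinear A \<Longrightarrow> A (- v) = - A v"
  using al_scaleR[of A "-1" v] by simp

lemma al_diff: "antilinear A \<Longrightarrow> A (v - w) = A v - A w"
  by (metis al_add al_neg diff_conv_add_uminus)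

definition clin :: "(complex^'n \<Rightarrow> complex^'n) \<Rightarrow> bool" where
  "clin f \<longleftrightarrow> (\<forall>z v w. f (z *s v + w) = z *s f v + f w)"

lemma clin_add: "clin f \<Longrightarrow> f (v + w) = f v + f w"
  unfolding clin_def by (metis vector_smult_lid)

lemma clin_zero: "clin f \<Longrightarrow> f 0 = 0"
  using clin_add[of f 0 0] by simp

lemma clin_smult: "clin f \<Longrightarrow> f (z *s v) = z *s f v"
  unfolding clin_def by (metis add.right_neutral clin_zero clin_def)

lemma clin_scaleR: "clin f \<Longrightarrow> f (r *\<^sub>R v) = r *\<^sub>R f v"
  by (simp add: scaleR_vs clin_smult)

lemma clin_neg: "clin f \<Longrightarrow> f (- v) = - f v"
  using clin_scaleR[of f "-1" v] by simp

lemma clin_diff: "clin f \<Longrightarrow> f (v - w) = f v - f w"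
  by (metis clin_add clin_neg diff_conv_add_uminus)

lemma clin_sq: "antilinear A \<Longrightarrow> clin (sqop A l)"
  unfolding clin_def sqop_def
  by (simp add: al_add al_smult scaleR_vs vec_eq_iff algebra_simps)

lemma clin_pow: "clin f \<Longrightarrow> clin (f ^^ j)"
  by (induction j) (auto simp: clin_def)

lemma sq_comm: "antilinear A \<Longrightarrow> A (sqop A l x) = sqop A l (A x)"
  unfolding sqop_def by (simp add: al_diff al_scaleR)

lemma pow_comm: "antilinear A \<Longrightarrow> A ((sqop A l ^^ j) x) = (sqop A l ^^ j) (A x)"
  by (induction j) (auto simp: sq_comm)

theorem mainTheorem4:
  fixes A :: "complex^'n \<Rightarrow> complex^'n" and l :: real and k :: nat
  assumes "antilinear A" and "l > 0" and "k \<ge> 1"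
  shows "{x + y | x y. x \<in> Wplus A l k \<and> y \<in> Wminus A l k} = Wk A l k
       \<and> Wplus A l k \<inter> Wminus A l k = Wk A l (k - 1)
       \<and> {x + y | x y. x \<in> vec.span (Wplus A l k) \<and> y \<in> Wk A l (k - 1)} = Wk A l k"
proof -
  note al = assms(1)
  define S where "S = sqop A l"
  define T where "T = S ^^ (k - 1)"
  have cS: "clin S" using clin_sq[OF al] S_def by simp
  have cT: "clin T" using clin_pow[OF cS] T_def by simp
  have TA: "A (T x) = T (A x)" for x using pow_comm[OF al] S_def T_def by simp
  have Wk_eq: "Wk A l k = {x. S (T x) = 0}"
  proof -
    have "(S ^^ k) x = S (T x)" for x using assms(3) unfolding T_def
      by (cases k) auto
    thus ?thesis unfolding Wk_def S_def by simp
  qed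
  have Wk1_eq: "Wk A l (k-1) = {x. T x = 0}" unfolding Wk_def T_def S_def by simp
  have Wp: "Wplus A l k = {x. A (T x) = l *\<^sub>R T x}"
    unfolding Wplus_def T_def S_def by auto
  have Wm: "Wminus A l k = {x. A (T x) = - (l *\<^sub>R T x)}"
    unfolding Wminus_def T_def S_def by (simp only: add_eq_0_iff2 mem_Collect_eq)
  have Sdef: "S u = A (A u) - (l^2) *\<^sub>R u" for u unfolding S_def sqop_def by simp
  have pk: "x \<in> Wk A l k" if "x \<in> Wplus A l k" for x
  proof -
    have "A (T x) = l *\<^sub>R T x" using that Wp by auto
    hence "A (A (T x)) = (l^2) *\<^sub>R T x" by (simp add: al_scaleR[OF al] power2_eq_square)
    thus ?thesis using Wk_eq Sdef by simp
  qed
  have mk: "x \<in> Wk A l k" if "x \<in> Wminus A l k" for x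
  proof -
    have "A (T x) = - (l *\<^sub>R T x)" using that Wm by auto
    hence "A (A (T x)) = (l^2) *\<^sub>R T x" by (simp add: al_scaleR[OF al] al_neg[OF al] power2_eq_square)
    thus ?thesis using Wk_eq Sdef by simp
  qed
  have sub: "Wk A l (k-1) \<subseteq> Wk A l k"
    using Wk_eq Wk1_eq clin_zero[OF cS] by auto
  have addk: "x + y \<in> Wk A l k" if "x \<in> Wk A l k" "y \<in> Wk A l k" for x y
    using that Wk_eq by (simp add: clin_add[OF cT] clin_add[OF cS])
  have decomp: "\<exists>a b. x = a + b \<and> a \<in> Wplus A l k \<and> b \<in> Wminus A l k"
    if "x \<in> Wk A l k" for x
  proof -
    define u where "u = T x"
    have Su: "A (A u) = (l^2) *\<^sub>R u" using that Wk_eq Sdef u_def by simp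
    define a where "a = (1/(2*l)) *\<^sub>R (A x + l *\<^sub>R x)"
    define b where "b = (1/(2*l)) *\<^sub>R (l *\<^sub>R x - A x)"
    have "a + b = (1/(2*l)) *\<^sub>R ((A x + l *\<^sub>R x) + (l *\<^sub>R x - A x))"
      unfolding a_def b_def by (simp only: scaleR_add_right)
    also have "(A x + l *\<^sub>R x) + (l *\<^sub>R x - A x) = l *\<^sub>R x + l *\<^sub>R x" by simp
    also have "\<dots> = (l + l) *\<^sub>R x" by (simp only: scaleR_add_left)
    also have "l + l = 2 * l" by simp
    finally have xab: "x = a + b" using assms(2) by simp
    have Ta: "T a = (1/(2*l)) *\<^sub>R (A u + l *\<^sub>R u)"
      unfolding a_def u_def by (simp add: clin_scaleR[OF cT] clin_add[OF cT] TA)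
    have Tb: "T b = (1/(2*l)) *\<^sub>R (l *\<^sub>R u - A u)"
      unfolding b_def u_def by (simp add: clin_scaleR[OF cT] clin_diff[OF cT] TA)
    have "A (T a) = l *\<^sub>R T a"
    proof -
      have "A (T a) = (1/(2*l)) *\<^sub>R (A (A u) + l *\<^sub>R A u)"
        unfolding Ta by (simp only: al_scaleR[OF al] al_add[OF al])
      also have "\<dots> = (1/(2*l)) *\<^sub>R (l *\<^sub>R (l *\<^sub>R u) + l *\<^sub>R A u)" by (simp add: Su power2_eq_square)
      also have "\<dots> = l *\<^sub>R T a" unfolding Ta by (simp add: scaleR_add_right)
      finally show ?thesis .
    qed
    moreover have "A (T b) = - (l *\<^sub>R T b)"
    proof -
      have "A (T b) = (1/(2*l)) *\<^sub>R (l *\<^sub>R A u - A (A u))"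
        unfolding Tb by (simp only: al_scaleR[OF al] al_diff[OF al])
      also have "\<dots> = (1/(2*l)) *\<^sub>R (l *\<^sub>R A u - l *\<^sub>R (l *\<^sub>R u))" by (simp add: Su power2_eq_square)
      also have "\<dots> = - (l *\<^sub>R T b)" unfolding Tb by (simp add: scaleR_diff_right)
      finally show ?thesis .
    qed
    ultimately show ?thesis using xab Wp Wm by auto
  qed
  have P1: "{x + y | x y. x \<in> Wplus A l k \<and> y \<in> Wminus A l k} = Wk A l k"
  proof
    show "{x + y | x y. x \<in> Wplus A l k \<and> y \<in> Wminus A l k} \<subseteq> Wk A l k"
      using pk mk addk by blast
    show "Wk A l k \<subseteq> {x + y | x y. x \<in> Wplus A l k \<and> y \<in> Wminus A l k}"
      using decomp by blast
  qed
  have P2: "Wplus A l k \<inter> Wminus A l k = Wk A l (k - 1)"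
  proof
    show "Wplus A l k \<inter> Wminus A l k \<subseteq> Wk A l (k - 1)"
    proof
      fix x assume "x \<in> Wplus A l k \<inter> Wminus A l k"
      hence "l *\<^sub>R T x = - (l *\<^sub>R T x)" using Wp Wm by auto
      hence "l *\<^sub>R T x + l *\<^sub>R T x = 0" by (metis add.right_inverse)
      hence "(l + l) *\<^sub>R T x = 0" by (simp only: scaleR_add_left)
      hence "T x = 0" using assms(2) by (simp only: scaleR_eq_0_iff) simp
      thus "x \<in> Wk A l (k - 1)" using Wk1_eq by simp
    qed
    show "Wk A l (k - 1) \<subseteq> Wplus A l k \<inter> Wminus A l k"
      using Wk1_eq Wp Wm al_zero[OF al] by auto
  qed
  have subspk: "vec.subspace (Wk A l k)"
    unfolding vec.subspace_def using Wk_eq addk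
    by (auto simp: clin_zero[OF cS] clin_zero[OF cT] clin_smult[OF cS] clin_smult[OF cT])
  have spk: "vec.span (Wplus A l k) \<subseteq> Wk A l k"
    using pk subspk by (meson subsetI vec.span_minimal)
  have mspan: "b \<in> vec.span (Wplus A l k)" if "b \<in> Wminus A l k" for b
  proof -
    have hb: "A (T b) = - (l *\<^sub>R T b)" using that Wm by auto
    have "A (T (\<i> *s b)) = l *\<^sub>R T (\<i> *s b)"
    proof -
      have "A (T (\<i> *s b)) = (- \<i>) *s A (T b)" by (simp add: clin_smult[OF cT] al_smult[OF al])
      also have "\<dots> = (- \<i>) *s (- (l *\<^sub>R T b))" by (simp add: hb)
      also have "\<dots> = l *\<^sub>R T (\<i> *s b)" by (simp add: clin_smult[OF cT] scaleR_vs vec_eq_iff)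
      finally show ?thesis .
    qed
    hence "\<i> *s b \<in> Wplus A l k" using Wp by simp
    hence "(- \<i>) *s (\<i> *s b) \<in> vec.span (Wplus A l k)"
      by (rule vec.span_scale[OF vec.span_base])
    moreover have "(- \<i>) *s (\<i> *s b) = b" by (simp add: vec_eq_iff)
    ultimately show ?thesis by simp
  qed
  have P3: "{x + y | x y. x \<in> vec.span (Wplus A l k) \<and> y \<in> Wk A l (k - 1)} = Wk A l k"
  proof
    show "{x + y | x y. x \<in> vec.span (Wplus A l k) \<and> y \<in> Wk A l (k - 1)} \<subseteq> Wk A l k"
      using spk sub addk by blast
    show "Wk A l k \<subseteq> {x + y | x y. x \<in> vec.span (Wplus A l k) \<and> y \<in> Wk A l (k - 1)}"
    proof
      fix x assume "x \<in> Wk A l k"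
      then obtain a b where "x = a + b" "a \<in> Wplus A l k" "b \<in> Wminus A l k" using decomp by blast
      hence "x \<in> vec.span (Wplus A l k)"
        using mspan by (simp add: vec.span_add vec.span_base)
      moreover have "0 \<in> Wk A l (k - 1)" using Wk1_eq clin_zero[OF cT] by simp
      ultimately show "x \<in> {x + y | x y. x \<in> vec.span (Wplus A l k) \<and> y \<in> Wk A l (k - 1)}"
        by (metis (mono_tags, lifting) add.right_neutral mem_Collect_eq)
    qed
  qed
  show ?thesis using P1 P2 P3 by blast
qed

end
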